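(* Let $a\neq0$, $b>0$, $d$ be integers with $d$ not a perfect square, $\alpha=a+b^2\sqrt d$, $N_\alpha=a^2-b^4d$ not a perfect square, $\varepsilon=(t+u\sqrt d)/2$ in the ring of integers of $\mathbb{Q}(\sqrt d)$ with $t,u$ nonzero integers, and let $x\ne0$, $y>0$ be integers with $x+y^2\sqrt d=\alpha\varepsilon^2$. Let $r_1'=tb^2+au+2by$ and $r_1''=tb^2+au-2by$. Then $\gcd(r_1',r_1'')$ is even, unless $N_\alpha\equiv1\pmod4$ and $4\mid d$. *)

theory Defs
  imports Complex_Main "HOL-Computational_Algebra.Polynomial"
begin

end

theory Submission
  imports Defs "HOL-Computational_Algebra.Nth_Powers"
begin


lemma sq_lemma:
  fixes d m n :: int
  assumes "d * m^2 = n^2" "m \<noteq> 0"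
  shows "\<exists>k. d = k^2"
proof -
  have "is_nth_power 2 (d * m^2)" using assms(1) by (simp add: is_nth_powerI)
  hence "is_nth_power 2 d" using assms(2) is_nth_power_mult_cancel_right[of 2 "m^2" d] by auto
  thus ?thesis by (auto simp: is_nth_power_def)
qed

lemma coeffs:
  fixes d A B C D :: int
  assumes "\<not> (\<exists>k::int. d = k ^ 2)"
    and "of_int A + of_int B * csqrt (of_int d) = of_int C + of_int D * csqrt (of_int d)"
  shows "A = C \<and> B = D"
proof -
  let ?s = "csqrt (of_int d)"
  have s2: "?s^2 = of_int d" by simp
  have BD: "B = D"
  proof (rule ccontr)
    assume ne: "B \<noteq> D"
    have "of_int (A - C) = of_int (D - B) * ?s" using assms(2) by (simp add: algebra_simps)
    hence "(of_int (A - C))^2 = (of_int (D - B))^2 * ?s^2" by (simp add: power_mult_distrib)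
    hence "(of_int ((A - C)^2) :: complex) = of_int (d * (D - B)^2)" using s2 by (simp add: algebra_simps)
    hence "d * (D - B)^2 = (A - C)^2" by (metis of_int_eq_iff)
    thus False using sq_lemma ne assms(1) by (metis eq_iff_diff_eq_0)
  qed
  then show ?thesis using assms(2) by simp
qed

lemma eqs:
  fixes a B d t u x Y :: int
  assumes nsq: "\<not> (\<exists>k::int. d = k ^ 2)"
    and E: "of_int x + of_int Y * csqrt (of_int d)
         = (of_int a + of_int B * csqrt (of_int d))
           * ((of_int t + of_int u * csqrt (of_int d)) / 2) ^ 2"
  shows "4*x = a*(t^2+u^2*d) + 2*B*d*t*u \<and> 4*Y = 2*a*t*u + B*(t^2+u^2*d)"
proof -
  let ?s = "csqrt (of_int d)"
  have s2: "?s^2 = of_int d" by simp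
  have s3: "?s^3 = of_int d * ?s" by (metis s2 power3_eq_cube power2_eq_square)
  have "of_int (4*x) + of_int (4*Y) * ?s = 4 * (of_int x + of_int Y * ?s)" by simp
  also have "\<dots> = (of_int a + of_int B * ?s) * (of_int t + of_int u * ?s) ^ 2"
    unfolding E by (simp add: power_divide)
  also have "\<dots> = of_int a * of_int t^2 + of_int a * of_int u^2 * ?s^2 + 2 * of_int B * of_int t * of_int u * ?s^2
      + (2 * of_int a * of_int t * of_int u + of_int B * of_int t^2) * ?s + of_int B * of_int u^2 * ?s^3"
    by (simp add: algebra_simps power2_eq_square power3_eq_cube)
  also have "\<dots> = of_int (a*(t^2+u^2*d) + 2*B*d*t*u) + of_int (2*a*t*u + B*(t^2+u^2*d)) * ?s"
    unfolding s2 s3 by (simp add: algebra_simps)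
  finally show ?thesis using coeffs[OF nsq] by blast
qed

lemma cop4: fixes z :: int assumes "odd z" shows "coprime 4 z"
proof -
  have "coprime 2 z" using assms by simp
  hence "coprime (2^2) z" using coprime_power_left_iff by blast
  thus ?thesis by simp
qed

lemma parity:
  fixes a b d t u x y :: int
  assumes hx: "4*x = a*(t^2+u^2*d) + 2*b^2*d*t*u" and hy: "4*y^2 = 2*a*t*u + b^2*(t^2+u^2*d)"
    and nex: "\<not> ((a ^ 2 - b ^ 4 * d) mod 4 = 1 \<and> 4 dvd d)"
  shows "even (t*b^2 + a*u)"
proof (cases "even t")
  case te: True
  show ?thesis
  proof (cases "even u")
    case True then show ?thesis using te by simp
  next
    case uo: False
    show ?thesis
    proof (rule ccontr)
      assume "odd (t*b^2 + a*u)"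
      hence ao: "odd a" using te by auto
      then obtain k where k: "a = 2*k+1" using oddE by blast
      show False
      proof (cases "4 dvd d")
        case True
        then obtain e where e: "d = 4*e" by blast
        have "a ^ 2 - b ^ 4 * d = 4*(k^2+k-b^4*e) + 1" unfolding k e by (simp add: algebra_simps power2_eq_square)
        moreover have "\<And>z::int. (4*z+1) mod 4 = 1" by presburger
        ultimately have "(a ^ 2 - b ^ 4 * d) mod 4 = 1" by metis
        thus False using nex True by blast
      next
        case False
        obtain m where m: "t = 2*m" using te by blast
        have "4*x = 4*(a*m^2 + b^2*d*m*u) + a*u^2*d" using hx unfolding m by (simp add: algebra_simps power2_eq_square)
        hence "(a*u^2)*d = 4*(x - (a*m^2 + b^2*d*m*u))" by (simp add: algebra_simps)
        hence "4 dvd (a*u^2)*d" by (rule dvdI)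
        moreover have "coprime 4 (a*u^2)"
          using ao uo by (intro cop4) simp
        ultimately have "4 dvd d" using coprime_dvd_mult_right_iff by blast
        thus False using False by blast
      qed
    qed
  qed
next
  case to: False
  show ?thesis
  proof (cases "even u")
    case ue: True
    show ?thesis
    proof (rule ccontr)
      assume "odd (t*b^2 + a*u)"
      hence bo: "odd b" using ue by auto
      obtain m where m: "u = 2*m" using ue by blast
      have "4*y^2 = 4*(a*t*m + b^2*m^2*d) + b^2*t^2" using hy unfolding m by (simp add: algebra_simps power2_eq_square)
      hence "b^2*t^2 = 2*(2*y^2 - 2*(a*t*m + b^2*m^2*d))" by (simp add: algebra_simps)
      hence "even (b^2*t^2)" by (rule dvdI)
      thus False using bo to by simp
    qed
  next
    case uo: False
    show ?thesis
    proof (rule ccontr)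
      assume H: "odd (t*b^2 + a*u)"
      show False
      proof (cases "even b")
        case be: True
        hence ao: "odd a" using H by auto
        obtain c where c: "b = 2*c" using be by blast
        have "4*y^2 = 2*(a*t*u) + 4*(c^2*(t^2+u^2*d))" using hy unfolding c by (simp add: algebra_simps power2_eq_square)
        hence "2*y^2 = a*t*u + 2*(c^2*(t^2+u^2*d))" by simp
        hence "a*t*u = 2*(y^2 - c^2*(t^2+u^2*d))" by (simp add: algebra_simps)
        hence "even (a*t*u)" by (rule dvdI)
        thus False using ao to uo by simp
      next
        case bo: False
        hence ae: "even a" using H to uo by auto
        obtain k where k: "a = 2*k" using ae by blast
        have "4*y^2 = 4*(k*t*u) + b^2*(t^2+u^2*d)" using hy unfolding k by (simp add: algebra_simps)
        hence "b^2*(t^2+u^2*d) = 4*(y^2 - k*t*u)" by (simp add: algebra_simps)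
        hence "4 dvd b^2*(t^2+u^2*d)" by (rule dvdI)
        moreover have "coprime 4 (b^2)" using bo by (intro cop4) simp
        ultimately have "4 dvd (t^2+u^2*d)" using coprime_dvd_mult_right_iff by blast
        then obtain w where w: "t^2+u^2*d = 4*w" by blast
        have "4*x = 4*(2*k*w) + 2*(b^2*d*t*u)" using hx unfolding k w by (simp add: algebra_simps)
        hence "2*x = 4*(k*w) + b^2*d*t*u" by simp
        hence "b^2*d*t*u = 2*(x - 2*(k*w))" by (simp add: algebra_simps)
        hence "even (b^2*d*t*u)" by (rule dvdI)
        hence de: "even d" using bo to uo by simp
        have "even (t^2+u^2*d)" using w by simp
        thus False using de to by simp
      qed
    qed
  qed
qed

theorem lemma3p4:
  fixes a b d t u x y :: int
  assumes "a \<noteq> 0" and "b > 0"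
    and "\<not> (\<exists>k::int. d = k ^ 2)"
    and "\<not> (\<exists>k::int. a ^ 2 - b ^ 4 * d = k ^ 2)"
    and "t \<noteq> 0" and "u \<noteq> 0"
    and "algebraic_int ((of_int t + of_int u * csqrt (of_int d)) / 2 :: complex)"
    and "x \<noteq> 0" and "y > 0"
    and "of_int x + of_int (y ^ 2) * csqrt (of_int d)
         = (of_int a + of_int (b ^ 2) * csqrt (of_int d))
           * ((of_int t + of_int u * csqrt (of_int d)) / 2) ^ 2"
  shows "\<not> ((a ^ 2 - b ^ 4 * d) mod 4 = 1 \<and> 4 dvd d)
         \<longrightarrow> even (gcd (t * b ^ 2 + a * u + 2 * b * y) (t * b ^ 2 + a * u - 2 * b * y))"
proof
  assume nex: "\<not> ((a ^ 2 - b ^ 4 * d) mod 4 = 1 \<and> 4 dvd d)"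
  have E: "4*x = a*(t^2+u^2*d) + 2*b^2*d*t*u \<and> 4*y^2 = 2*a*t*u + b^2*(t^2+u^2*d)"
    using eqs[OF assms(3) assms(10)] by simp
  have ev: "even (t*b^2 + a*u)" using parity[where a=a and b=b and d=d and t=t and u=u and x=x and y=y] E nex by blast
  have "even (t * b ^ 2 + a * u + 2 * b * y)" "even (t * b ^ 2 + a * u - 2 * b * y)" using ev by auto
  thus "even (gcd (t * b ^ 2 + a * u + 2 * b * y) (t * b ^ 2 + a * u - 2 * b * y))" by simp
qed

end
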